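(* Let $\kappa>-1$ and $\lambda\in\mathbb{C}$. Let $T_\kappa$ be the operator $T_\kappa f(x)=f'(x)+\kappa\frac{f(x)-f(0)}{x}$ on functions of one real variable. Then the problem $$T_\kappa f(x)=i\lambda f(x),\qquad f(0)=1,$$ has a unique analytic solution, namely $f(x)=M_\kappa(i\lambda x):=M(1,\kappa+1;i\lambda x)$, where $M(a,b;z)=\sum_{n=0}^\infty\frac{(a)_n}{(b)_n}\frac{z^n}{n!}$ is the confluent hypergeometric (Kummer) function.
   Context: $(a)_n=\Gamma(a+n)/\Gamma(a)$ is the Pochhammer symbol. For an analytic $f$, the quotient $(f(x)-f(0))/x$ is understood as its analytic extension at $x=0$. *)

theory Defs
  imports "HOL-Analysis.Analysis"
begin

definition real_analytic_on :: "(real \<Rightarrow> complex) \<Rightarrow> real set \<Rightarrow> bool" where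
  "real_analytic_on f S \<longleftrightarrow>
     (\<forall>x0\<in>S. \<exists>r>0. \<exists>c::nat \<Rightarrow> complex.
        \<forall>y. \<bar>y - x0\<bar> < r \<longrightarrow> (\<lambda>n. c n * complex_of_real (y - x0) ^ n) sums f y)"

text \<open>Dunkl-type operator T_kappa f(x) = f'(x) + kappa (f(x) - f(0))/x; at x = 0 the
  quotient is its (analytic) extension, i.e. f'(0).\<close>
definition T_kappa :: "real \<Rightarrow> (real \<Rightarrow> complex) \<Rightarrow> real \<Rightarrow> complex" where
  "T_kappa \<kappa> f x =
     vector_derivative f (at x) +
     complex_of_real \<kappa> * (if x = 0 then vector_derivative f (at 0)
                            else (f x - f 0) / complex_of_real x)"

definition kummer_M :: "complex \<Rightarrow> complex \<Rightarrow> complex \<Rightarrow> complex" where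
  "kummer_M a b z = (\<Sum>n. pochhammer a n / pochhammer b n * z ^ n / fact n)"

end

theory Submission
  imports Defs "HOL-Complex_Analysis.Complex_Analysis"
begin

lemma right_quot:
  fixes g :: "real \<Rightarrow> complex"
  assumes "(g has_vector_derivative d) (at 0)" "g 0 = 0"
  shows "((\<lambda>y. g y / of_real y) \<longlongrightarrow> d) (at_right 0)"
proof -
  have "(g has_vector_derivative d) (at 0 within {0<..})"
    using assms(1) by (rule has_vector_derivative_at_within)
  then have "((\<lambda>y. (1 / norm(y - 0)) *\<^sub>R (g y - (g 0 + (y - 0) *\<^sub>R d))) \<longlongrightarrow> 0) (at_right 0)"
    unfolding has_vector_derivative_def has_derivative_within by simp
  moreover have "\<forall>\<^sub>F y in at_right 0. (1 / norm(y - 0)) *\<^sub>R (g y - (g 0 + (y - 0) *\<^sub>R d)) = g y / of_real y - d"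
    unfolding eventually_at_right_field
    by (rule exI[of _ 1]) (auto simp: assms(2) scaleR_conv_of_real field_simps)
  ultimately have "((\<lambda>y. g y / of_real y - d) \<longlongrightarrow> 0) (at_right 0)"
    using Lim_transform_eventually by fastforce
  then have "((\<lambda>y. (g y / of_real y - d) + d) \<longlongrightarrow> 0 + d) (at_right 0)"
    by (intro tendsto_add tendsto_const)
  then show ?thesis by simp
qed

lemma pos_zero:
  fixes g :: "real \<Rightarrow> complex" and c :: complex and \<kappa> :: real
  assumes k: "\<kappa> > -1" and g0: "g 0 = 0" and gd0: "(g has_vector_derivative d) (at 0)"
    and gd: "\<And>x. x > 0 \<Longrightarrow> (g has_vector_derivative (c * g x - of_real \<kappa> * g x / of_real x)) (at x)"
  shows "\<And>x. x > 0 \<Longrightarrow> g x = 0"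
proof -
  define h where "h x = g x * of_real (x powr \<kappa>) * exp (- c * of_real x)" for x
  have hd: "(h has_vector_derivative 0) (at x within {0<..})" if x: "x > 0" for x
  proof -
    have p: "((\<lambda>x. of_real (x powr \<kappa>) :: complex) has_vector_derivative of_real (\<kappa> * x powr (\<kappa> - 1))) (at x)"
      by (rule has_vector_derivative_of_real) (rule has_real_derivative_powr[OF x])
    have e0: "((\<lambda>w. exp (- c * w)) has_field_derivative (exp (- c * of_real x) * (- c))) (at (of_real x))"
      by (auto intro!: derivative_eq_intros)
    have e: "((\<lambda>x. exp (- c * of_real x)) has_vector_derivative (exp (- c * of_real x) * (- c))) (at x)"
      using has_vector_derivative_real_field[OF e0] .
    have "(h has_vector_derivative
        (g x * of_real (x powr \<kappa>) * (exp (- c * of_real x) * (- c)) +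
         (g x * of_real (\<kappa> * x powr (\<kappa> - 1)) + (c * g x - of_real \<kappa> * g x / of_real x) * of_real (x powr \<kappa>)) * exp (- c * of_real x))) (at x)"
      unfolding h_def by (intro has_vector_derivative_mult gd x p e)
    moreover have "x powr (\<kappa> - 1) = x powr \<kappa> / x" using x by (simp add: powr_diff)
    ultimately have "(h has_vector_derivative 0) (at x)"
      using x by (simp add: field_simps)
    then show ?thesis by (rule has_vector_derivative_at_within)
  qed
  obtain K where K: "\<And>x. x \<in> {0<..} \<Longrightarrow> h x = K"
    using has_vector_derivative_zero_constant[of "{0<..}" h] hd by auto
  have lim: "((\<lambda>y. g y / of_real y * of_real (y powr (\<kappa> + 1)) * exp (- c * of_real y)) \<longlongrightarrow> d * of_real 0 * exp (- c * of_real 0)) (at_right 0)"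
  proof (intro tendsto_mult tendsto_of_real right_quot[OF gd0 g0])
    show "((\<lambda>y. y powr (\<kappa> + 1)) \<longlongrightarrow> 0) (at_right 0)"
      by (rule tendsto_zero_powrI) (use k in \<open>auto intro!: tendsto_intros eventually_at_rightI[of 0 1]\<close>)
    show "((\<lambda>y. exp (- c * of_real y)) \<longlongrightarrow> exp (- c * of_real 0)) (at_right 0)"
      by (intro tendsto_intros)
  qed
  have ev: "\<forall>\<^sub>F y in at_right 0. g y / of_real y * of_real (y powr (\<kappa> + 1)) * exp (- c * of_real y) = K"
  proof (rule eventually_at_rightI[of 0 1])
    fix y :: real assume "y \<in> {0<..<1}"
    then have y: "y > 0" by simp
    have "y powr (\<kappa> + 1) = y powr \<kappa> * y" using y by (simp add: powr_add)
    then show "g y / of_real y * of_real (y powr (\<kappa> + 1)) * exp (- c * of_real y) = K"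
      using K[of y] y by (simp add: h_def field_simps)
  qed simp
  have "K = 0"
    using tendsto_unique[OF _ tendsto_eventually[OF ev] ] lim by (auto simp: trivial_limit_at_right_real)
  then show "g x = 0" if "x > 0" for x
    using K[of x] that by (simp add: h_def)
qed

lemma ra_deriv:
  assumes "real_analytic_on f UNIV"
  shows "\<exists>D. (f has_vector_derivative D) (at x)"
proof -
  obtain r c where r: "r > 0" and s: "\<And>y. \<bar>y - x\<bar> < r \<Longrightarrow> (\<lambda>n. c n * complex_of_real (y - x) ^ n) sums f y"
    using assms unfolding real_analytic_on_def by blast
  define P where "P w = (\<Sum>n. c n * w ^ n)" for w :: complex
  have sm: "summable (\<lambda>n. c n * w ^ n)" if "norm w < r" for w
  proof -
    define t where "t = (norm w + r) / 2"
    have "0 \<le> norm w" by simp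
    then have "0 < norm w + r" using r by linarith
    then have "0 < t" "t < r" using that unfolding t_def by auto
    then have "\<bar>(x + t) - x\<bar> < r" by simp
    then have "summable (\<lambda>n. c n * complex_of_real ((x + t) - x) ^ n)"
      using s[of "x + t"] by (auto simp: sums_iff)
    then have "summable (\<lambda>n. c n * complex_of_real t ^ n)" by simp
    moreover have "norm w < t" using that unfolding t_def by simp
    then have "norm w < norm (complex_of_real t)" using \<open>0 < t\<close> by simp
    ultimately show ?thesis by (rule powser_inside)
  qed
  obtain D where D: "(P has_field_derivative D) (at 0)"
    using termdiffs_strong'[of r c 0] sm r unfolding P_def by auto
  have "((\<lambda>w. P (w - of_real x)) has_field_derivative D) (at (of_real x))"
  proof -
    have "((\<lambda>w. w - of_real x) has_field_derivative 1) (at (of_real x))"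
      by (auto intro!: derivative_eq_intros)
    from DERIV_chain'[OF this] D show ?thesis by simp
  qed
  then have "((\<lambda>y. P (of_real y - of_real x)) has_vector_derivative D) (at x)"
    by (rule has_vector_derivative_real_field)
  then have "(f has_vector_derivative D) (at x)"
  proof (rule has_vector_derivative_transform_within_open[of _ _ _ "ball x r"])
    fix y assume "y \<in> ball x r"
    then have "\<bar>y - x\<bar> < r" by (simp add: dist_real_def abs_minus_commute)
    then show "P (of_real y - of_real x) = f y"
      using s[of y] unfolding P_def by (simp add: sums_iff)
  qed (use r in auto)
  then show ?thesis by blast
qed

locale kum =
  fixes \<kappa> :: real
  assumes k: "\<kappa> > -1"
begin

definition b :: complex where "b = complex_of_real (\<kappa> + 1)"
definition a :: "nat \<Rightarrow> complex" where "a n = 1 / pochhammer b n"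
definition F :: "complex \<Rightarrow> complex" where "F z = (\<Sum>n. a n * z ^ n)"
definition F' :: "complex \<Rightarrow> complex" where "F' z = (\<Sum>n. diffs a n * z ^ n)"

lemma bn_nz: "b + of_nat n \<noteq> 0"
proof
  assume "b + of_nat n = 0"
  then have "Re (b + of_nat n) = 0" by simp
  then show False using k by (simp add: b_def)
qed

lemma norm_bn: "norm (b + of_nat n) \<ge> of_nat n"
proof -
  have "of_nat n \<le> Re (b + of_nat n)" using k by (simp add: b_def)
  also have "\<dots> \<le> norm (b + of_nat n)" by (rule complex_Re_le_cmod)
  finally show ?thesis .
qed

lemma poch_nz: "pochhammer b n \<noteq> 0"
  by (induction n) (auto simp: pochhammer_Suc bn_nz)

lemma a_Suc: "a (Suc n) = a n / (b + of_nat n)"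
  by (simp add: a_def pochhammer_Suc)

lemma a0: "a 0 = 1" by (simp add: a_def)
lemma a1: "a 1 = 1 / b" by (simp add: a_def)

lemma summ: "summable (\<lambda>n. a n * z ^ n)"
proof (rule summable_ratio_test[of "1/2" "nat \<lceil>2 * norm z\<rceil> + 1"])
  fix n assume n: "n \<ge> nat \<lceil>2 * norm z\<rceil> + 1"
  then have n2: "2 * norm z \<le> of_nat n" by linarith
  have npos: "n > 0" using n by simp
  have "norm (a (Suc n) * z ^ Suc n) = norm (a n * z ^ n) * (norm z / norm (b + of_nat n))"
    by (simp add: a_Suc norm_mult norm_divide field_simps)
  also have "norm z / norm (b + of_nat n) \<le> 1/2"
  proof -
    have "0 < real n" using npos by simp
    also have "\<dots> \<le> norm (b + of_nat n)" by (rule norm_bn)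
    finally have p: "0 < norm (b + of_nat n)" .
    have "2 * norm z \<le> norm (b + of_nat n)" using n2 norm_bn[of n] by linarith
    then show ?thesis using p by (simp add: field_simps)
  qed
  then have "norm (a n * z ^ n) * (norm z / norm (b + of_nat n)) \<le> norm (a n * z ^ n) * (1/2)"
    by (intro mult_left_mono) auto
  finally show "norm (a (Suc n) * z ^ Suc n) \<le> 1/2 * norm (a n * z ^ n)" by simp
qed simp

lemma F_deriv: "(F has_field_derivative F' z) (at z)"
  unfolding F_def F'_def by (rule termdiffs_strong_converges_everywhere) (rule summ)

lemma F0: "F 0 = 1" by (simp add: F_def a0)
lemma F'0: "F' 0 = 1 / b" using a1 by (simp add: F'_def diffs_def)

lemma key: "z * F' z + of_real \<kappa> * (F z - 1) = z * F z"
proof -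
  have s1: "(\<lambda>n. z * (diffs a n * z ^ n)) sums (z * F' z)"
    unfolding F'_def by (intro sums_mult summable_sums termdiff_converges_all summ)
  have "(\<lambda>n. a (Suc n) * z ^ Suc n) sums (F z - 1)"
    using summable_sums[OF summ[of z]] unfolding F_def
    by (subst sums_Suc_iff) (simp add: a0)
  then have s2: "(\<lambda>n. of_real \<kappa> * (a (Suc n) * z ^ Suc n)) sums (of_real \<kappa> * (F z - 1))"
    by (rule sums_mult)
  have s3: "(\<lambda>n. z * (a n * z ^ n)) sums (z * F z)"
    unfolding F_def by (intro sums_mult summable_sums summ)
  have eq: "z * (diffs a n * z ^ n) + of_real \<kappa> * (a (Suc n) * z ^ Suc n) = z * (a n * z ^ n)" for n
  proof -
    have "b + of_nat n = of_nat (Suc n) + of_real \<kappa>" by (simp add: b_def)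
    then have "(of_nat (Suc n) + of_real \<kappa>) * a (Suc n) = a n"
      using bn_nz[of n] by (simp add: a_Suc add_ac)
    then show ?thesis by (simp add: diffs_def algebra_simps flip: \<open>_ = a n\<close>)
  qed
  from sums_add[OF s1 s2] have "(\<lambda>n. z * (a n * z ^ n)) sums (z * F' z + of_real \<kappa> * (F z - 1))"
    by (simp only: eq)
  with s3 show ?thesis using sums_unique2 by blast
qed

end

theorem theorem5p1:
  fixes \<kappa> :: real and lam :: complex
  assumes "\<kappa> > -1"
  defines "M \<equiv> (\<lambda>x::real. kummer_M 1 (complex_of_real (\<kappa> + 1)) (\<i> * lam * complex_of_real x))"
  shows "real_analytic_on M UNIV \<and> M 0 = 1 \<and> (\<forall>x. T_kappa \<kappa> M x = \<i> * lam * M x) \<and>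
         (\<forall>f. real_analytic_on f UNIV \<and> f 0 = 1 \<and> (\<forall>x. T_kappa \<kappa> f x = \<i> * lam * f x)
              \<longrightarrow> f = M)"
proof -
  interpret kum \<kappa> by unfold_locales (rule assms)
  define c where "c = \<i> * lam"
  have MF: "M x = F (c * of_real x)" for x
    unfolding M_def kummer_M_def F_def a_def b_def c_def
    by (simp add: pochhammer_fact[symmetric])
  have Md: "(M has_vector_derivative c * F' (c * of_real x)) (at x)" for x
  proof -
    have "((\<lambda>w. c * w) has_field_derivative c) (at (of_real x))"
      by (auto intro!: derivative_eq_intros)
    from DERIV_chain'[OF this F_deriv]
    have "((\<lambda>w. F (c * w)) has_field_derivative c * F' (c * of_real x)) (at (of_real x))"
      by (simp add: mult.commute)
    from has_vector_derivative_real_field[OF this] show ?thesis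
      by (simp add: MF[abs_def])
  qed
  have hol: "F holomorphic_on UNIV"
    using F_deriv by (auto simp: holomorphic_on_open)
  have ra: "real_analytic_on M UNIV"
    unfolding real_analytic_on_def
  proof (intro ballI exI conjI allI impI)
    fix x0 y :: real
    define R where "R = norm (c * of_real (y - x0)) + 1"
    have "c * of_real y \<in> ball (c * of_real x0) R"
      by (simp add: R_def dist_norm norm_minus_commute algebra_simps)
    from holomorphic_power_series[OF holomorphic_on_subset[OF hol] this]
    have "(\<lambda>n. (deriv ^^ n) F (c * of_real x0) / fact n * (c * of_real y - c * of_real x0) ^ n) sums F (c * of_real y)"
      by simp
    moreover have "c * of_real y - c * of_real x0 = c * of_real (y - x0)"
      by (simp add: algebra_simps)
    ultimately show "(\<lambda>n. ((deriv ^^ n) F (c * of_real x0) / fact n * c ^ n) * complex_of_real (y - x0) ^ n) sums M y"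
      by (simp add: MF power_mult_distrib mult_ac)
  qed (rule zero_less_one)
  have M0: "M 0 = 1" by (simp add: MF F0)
  have bnz: "b \<noteq> 0" using bn_nz[of 0] by simp
  have TM: "T_kappa \<kappa> M x = c * M x" for x
  proof (cases "x = 0")
    case True
    have "T_kappa \<kappa> M x = c * F' 0 + of_real \<kappa> * (c * F' 0)"
      using True vector_derivative_at[OF Md[of 0]] by (simp add: T_kappa_def)
    also have "\<dots> = c * (1 + of_real \<kappa>) * F' 0" by (simp add: algebra_simps)
    also have "1 + of_real \<kappa> = b" by (simp add: b_def)
    also have "c * b * F' 0 = c" using bnz by (simp add: F'0)
    finally show ?thesis using True M0 by simp
  next
    case False
    then have x: "complex_of_real x \<noteq> 0" by simp
    have k: "c * of_real x * F' (c * of_real x) + of_real \<kappa> * (F (c * of_real x) - 1) = c * of_real x * F (c * of_real x)"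
      by (rule key)
    have "T_kappa \<kappa> M x = c * F' (c * of_real x) + of_real \<kappa> * (F (c * of_real x) - 1) / of_real x"
      using False vector_derivative_at[OF Md[of x]] by (simp add: T_kappa_def MF F0)
    also have "\<dots> = (c * of_real x * F' (c * of_real x) + of_real \<kappa> * (F (c * of_real x) - 1)) / of_real x"
      using x by (simp add: field_simps)
    also have "\<dots> = c * M x" using x by (simp only: k MF) simp
    finally show ?thesis .
  qed
  have uniq: "f = M" if fa: "real_analytic_on f UNIV" and f0: "f 0 = 1" and Tf: "\<forall>x. T_kappa \<kappa> f x = c * f x" for f
  proof -
    obtain Df where Df: "\<And>x. (f has_vector_derivative Df x) (at x)"
      using ra_deriv[OF fa] by metis
    define DM where "DM x = c * F' (c * of_real x)" for x
    define g where "g x = f x - M x" for x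
    have gd: "(g has_vector_derivative (Df x - DM x)) (at x)" for x
      unfolding g_def DM_def by (intro has_vector_derivative_diff Df Md)
    have g0: "g 0 = 0" using f0 M0 by (simp add: g_def)
    have gx: "Df x - DM x = c * g x - of_real \<kappa> * g x / of_real x" if "x \<noteq> 0" for x
    proof -
      have "Df x + of_real \<kappa> * (f x - 1) / of_real x = c * f x"
        using spec[OF Tf, of x] vector_derivative_at[OF Df[of x]] that f0 by (simp add: T_kappa_def)
      moreover have "DM x + of_real \<kappa> * (M x - 1) / of_real x = c * M x"
        using TM[of x] vector_derivative_at[OF Md[of x]] that M0 by (simp add: T_kappa_def DM_def)
      ultimately have e: "Df x = c * f x - of_real \<kappa> * (f x - 1) / of_real x"
          "DM x = c * M x - of_real \<kappa> * (M x - 1) / of_real x"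
        by (simp_all add: eq_diff_eq)
      show ?thesis unfolding e g_def by (simp add: algebra_simps diff_divide_distrib)
    qed
    have pos: "g x = 0" if "x > 0" for x
    proof (rule pos_zero[OF assms(1) g0 gd[of 0], of c])
      fix x :: real assume "x > 0"
      then show "(g has_vector_derivative c * g x - complex_of_real \<kappa> * g x / complex_of_real x) (at x)"
        using gd[of x] gx[of x] by simp
    qed (rule that)
    define h where "h y = g (- y)" for y
    have hd: "(h has_vector_derivative (- (Df (- y) - DM (- y)))) (at y)" for y
    proof -
      have u: "((\<lambda>y::real. - y) has_vector_derivative (-1)) (at y)"
        by (auto intro!: derivative_eq_intros)
      from vector_diff_chain_at[OF u gd[of "- y"]] show ?thesis
        by (simp add: h_def[abs_def] o_def)
    qed
    have neg: "h y = 0" if "y > 0" for y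
    proof (rule pos_zero[OF assms(1) _ hd[of 0], of "- c"])
      show "h 0 = 0" using g0 by (simp add: h_def)
      fix x :: real assume x: "x > 0"
      have "- (Df (- x) - DM (- x)) = - c * h x - of_real \<kappa> * h x / of_real x"
        using gx[of "- x"] x by (simp add: h_def field_simps)
      then show "(h has_vector_derivative - c * h x - of_real \<kappa> * h x / of_real x) (at x)"
        using hd[of x] by simp
    qed (use that in auto)
    show "f = M"
    proof
      fix x :: real
      have "g x = 0"
      proof (cases x "0::real" rule: linorder_cases)
        case less then show ?thesis using neg[of "- x"] by (simp add: h_def)
      qed (use g0 pos in auto)
      then show "f x = M x" by (simp add: g_def)
    qed
  qed
  show ?thesis using ra M0 TM uniq unfolding c_def by blast
qed

end
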